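(* Let $m\ge1$ be an integer and write $s_n=s_n^{(m+1,m+2)}$. Then for all $n\ge0$, \[ s_n^2=s_n+2\sum_{k=0}^{n-2m-3}\sum_{r=2m+3}^{n-k}P_{r-2m-3}^{\{-2,m-1,m\}}s_k s_{n-k-r}^2 . \]
   Context: For positive integers $p<q$, $s_n^{(p,q)}$ is defined by $s_n^{(p,q)}=\delta_{0,n}+s_{n-p}^{(p,q)}+s_{n-q}^{(p,q)}$ for $n\ge0$ and $s_n^{(p,q)}=0$ for $n<0$. $\delta_{i,j}$ is $1$ if $i=j$ and $0$ otherwise. For a finite set $W$ of integers, $P_n^W$ is the number of permutations $\pi$ of $\{1,\dots,n\}$ with $\pi(i)-i\in W$ for all $i$ (the permanent of the $n\times n$ $(0,1)$ Toeplitz matrix whose $(i,j)$ entry is $1$ iff $j-i\in W$), with $P_0^W=1$. Empty sums are $0$. *)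

theory Defs
  imports Main "HOL-Combinatorics.Permutations"
begin

text \<open>s_n^{(p,q)}: s_n = [n=0] + s_{n-p} + s_{n-q}, with s_n = 0 for n < 0.
  The guards 0 < p, 0 < q only matter for termination (the paper assumes p, q positive).\<close>
function s_pq :: "nat \<Rightarrow> nat \<Rightarrow> nat \<Rightarrow> nat" where
  "s_pq p q n =
     (if n = 0 then 1 else 0)
     + (if 0 < p \<and> p \<le> n then s_pq p q (n - p) else 0)
     + (if 0 < q \<and> q \<le> n then s_pq p q (n - q) else 0)"
  by auto
termination by (relation "measure (\<lambda>(p,q,n). n)") auto

declare s_pq.simps [simp del]

definition P_perm :: "int set \<Rightarrow> nat \<Rightarrow> nat" where
  "P_perm W n = card {\<pi>. \<pi> permutes {1..n} \<and> (\<forall>i\<in>{1..n}. int (\<pi> i) - int i \<in> W)}"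

end

theory Submission
  imports Defs "HOL-Library.FuncSet"
begin

definition okm :: "nat \<Rightarrow> nat \<Rightarrow> nat \<Rightarrow> bool" where
  "okm m x y \<longleftrightarrow> (x = y + 2 \<or> y + 1 = x + m \<or> y = x + m)"

definition FS :: "nat \<Rightarrow> nat set \<Rightarrow> nat set \<Rightarrow> (nat \<Rightarrow> nat) set" where
  "FS m A B = {f. bij_betw f A B \<and> (\<forall>x\<in>A. okm m x (f x)) \<and> (\<forall>x. x \<notin> A \<longrightarrow> f x = x)}"

definition NB :: "nat \<Rightarrow> nat set \<Rightarrow> nat set \<Rightarrow> nat" where
  "NB m A B = card (FS m A B)"

lemma FS_finite:
  assumes "finite A" "finite B"
  shows "finite (FS m A B)"
proof -
  have "inj_on (\<lambda>f. restrict f A) (FS m A B)"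
  proof (rule inj_onI)
    fix f g assume f: "f \<in> FS m A B" and g: "g \<in> FS m A B" and e: "restrict f A = restrict g A"
    show "f = g"
    proof
      fix x show "f x = g x"
      proof (cases "x \<in> A")
        case True then show ?thesis using e by (metis restrict_apply')
      next
        case False then show ?thesis using f g by (simp add: FS_def)
      qed
    qed
  qed
  moreover have "(\<lambda>f. restrict f A) ` FS m A B \<subseteq> PiE A (\<lambda>_. B)"
    by (auto simp: FS_def bij_betw_def)
  moreover have "finite (PiE A (\<lambda>_. B))" using assms by (intro finite_PiE) auto
  ultimately show ?thesis by (meson finite_imageD finite_subset)
qed

lemma NB_card_neq:
  assumes "finite A" "card A \<noteq> card B"
  shows "NB m A B = 0"
proof -
  have "FS m A B = {}" using assms by (auto simp: FS_def dest: bij_betw_same_card)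
  then show ?thesis by (simp add: NB_def)
qed

lemma NB_nopre:
  assumes "b \<in> B" "\<forall>x\<in>A. \<not> okm m x b"
  shows "NB m A B = 0"
proof -
  have "FS m A B = {}"
  proof (rule ccontr)
    assume "FS m A B \<noteq> {}"
    then obtain f where f: "f \<in> FS m A B" by blast
    then have "f ` A = B" by (simp add: FS_def bij_betw_def)
    then obtain x where "x \<in> A" "f x = b" using assms(1) by blast
    then show False using f assms(2) by (auto simp: FS_def)
  qed
  then show ?thesis by (simp add: NB_def)
qed

lemma NB_empty: "NB m {} {} = 1"
proof -
  have "FS m {} {} = {id}" by (auto simp: FS_def bij_betw_def)
  then show ?thesis by (simp add: NB_def)
qed

lemma NB_split:
  assumes fA: "finite A" and fB: "finite B" and a: "a \<in> A"
  shows "NB m A B = (\<Sum>y\<in>{y\<in>B. okm m a y}. NB m (A - {a}) (B - {y}))"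
proof -
  let ?Y = "{y\<in>B. okm m a y}"
  let ?F = "\<lambda>y. (\<lambda>g. g(a := y)) ` FS m (A - {a}) (B - {y})"
  have eq: "FS m A B = (\<Union>y\<in>?Y. ?F y)"
  proof
    show "FS m A B \<subseteq> (\<Union>y\<in>?Y. ?F y)"
    proof
      fix f assume f: "f \<in> FS m A B"
      have bf: "bij_betw f A B" and okf: "\<forall>x\<in>A. okm m x (f x)" and fo: "\<forall>x. x \<notin> A \<longrightarrow> f x = x"
        using f by (auto simp: FS_def)
      let ?y = "f a"
      have yY: "?y \<in> ?Y" using bf okf a by (auto simp: bij_betw_def)
      have "bij_betw f (A - {a}) (B - {?y})"
        using bf a by (intro bij_betw_DiffI) (auto simp: bij_betw_def)
      then have "bij_betw (f(a := a)) (A - {a}) (B - {?y})"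
        by (rule bij_betw_cong[THEN iffD1, rotated]) auto
      then have "f(a := a) \<in> FS m (A - {a}) (B - {?y})"
        using okf fo by (auto simp: FS_def)
      moreover have "f = (f(a := a))(a := ?y)" by auto
      ultimately show "f \<in> (\<Union>y\<in>?Y. ?F y)" using yY by blast
    qed
  next
    show "(\<Union>y\<in>?Y. ?F y) \<subseteq> FS m A B"
    proof
      fix h assume "h \<in> (\<Union>y\<in>?Y. ?F y)"
      then obtain y g where y: "y \<in> ?Y" and g: "g \<in> FS m (A - {a}) (B - {y})" and h: "h = g(a := y)"
        by blast
      have bg: "bij_betw g (A - {a}) (B - {y})" and okg: "\<forall>x\<in>A-{a}. okm m x (g x)"
        and go: "\<forall>x. x \<notin> A - {a} \<longrightarrow> g x = x" using g by (auto simp: FS_def)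
      have "bij_betw h (A - {a}) (B - {y}) = bij_betw g (A - {a}) (B - {y})"
        by (rule bij_betw_cong) (simp add: h)
      then have "bij_betw h (A - {a}) (B - {y})" using bg by simp
      moreover have "inj_on h A"
      proof -
        have i1: "inj_on h (A - {a})" using \<open>bij_betw h (A - {a}) (B - {y})\<close> by (simp add: bij_betw_def)
        have im: "h ` (A - {a}) = B - {y}" using \<open>bij_betw h (A - {a}) (B - {y})\<close> by (simp add: bij_betw_def)
        have ha: "h a = y" using h by simp
        have "h a \<notin> h ` (A - {a})" unfolding im ha by simp
        then have "inj_on h (insert a (A - {a}))" using i1 by (simp only: inj_on_insert) simp
        moreover have "insert a (A - {a}) = A" using a by blast
        ultimately show ?thesis by simp
      qed
      moreover have "h ` A = B"
      proof -
        have im: "h ` (A - {a}) = B - {y}" using \<open>bij_betw h (A - {a}) (B - {y})\<close> by (simp add: bij_betw_def)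
        have "h ` A = h ` (insert a (A - {a}))" using a by (simp add: insert_absorb)
        also have "\<dots> = insert (h a) (h ` (A - {a}))" by (rule image_insert)
        also have "\<dots> = insert y (B - {y})" using im h by simp
        also have "\<dots> = B" using y by blast
        finally show ?thesis .
      qed
      ultimately have bh: "bij_betw h A B" by (simp add: bij_betw_def)
      have okh: "\<forall>x\<in>A. okm m x (h x)"
      proof
        fix x assume "x \<in> A"
        show "okm m x (h x)"
        proof (cases "x = a")
          case True then show ?thesis using y h by simp
        next
          case False then show ?thesis using okg \<open>x \<in> A\<close> h by simp
        qed
      qed
      have hout: "\<forall>x. x \<notin> A \<longrightarrow> h x = x"
      proof (intro allI impI)
        fix x assume "x \<notin> A"
        then have "x \<noteq> a" "x \<notin> A - {a}" using a by auto
        then show "h x = x" using go h by simp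
      qed
      show "h \<in> FS m A B" unfolding FS_def using bh okh hout by blast
    qed
  qed
  have inj: "inj_on (\<lambda>g. g(a := y)) (FS m (A - {a}) (B - {y}))" for y
  proof (rule inj_onI)
    fix g1 g2 assume "g1 \<in> FS m (A - {a}) (B - {y})" "g2 \<in> FS m (A - {a}) (B - {y})"
      and e: "g1(a := y) = g2(a := y)"
    then have "g1 a = a" "g2 a = a" by (auto simp: FS_def)
    then show "g1 = g2" using e by (metis fun_upd_triv fun_upd_upd)
  qed
  have "card (FS m A B) = (\<Sum>y\<in>?Y. card (?F y))"
    unfolding eq
  proof (rule card_UN_disjoint)
    show "finite ?Y" using fB by simp
    show "\<forall>y\<in>?Y. finite (?F y)" using fA fB FS_finite by auto
    show "\<forall>y\<in>?Y. \<forall>z\<in>?Y. y \<noteq> z \<longrightarrow> ?F y \<inter> ?F z = {}" by (auto dest!: fun_cong[where x=a])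
  qed
  also have "\<dots> = (\<Sum>y\<in>?Y. NB m (A - {a}) (B - {y}))"
    by (rule sum.cong) (auto simp: NB_def card_image[OF inj])
  finally show ?thesis by (simp add: NB_def)
qed


function Gf :: "nat \<Rightarrow> nat \<Rightarrow> nat \<Rightarrow> nat" where
  "Gf m e K = (if K = 0 then (if e = 0 then 1 else 0) else if K \<le> e then 0
     else (if e < m then Gf m (m - e - 1) (K - e - 1) else 0) + Gf m (m - e) (K - e - 1))"
  by auto
termination by (relation "measure (\<lambda>(m,e,K). K)") auto

declare Gf.simps [simp del]

lemma Gf_big: "K < e \<Longrightarrow> Gf m e K = 0"
  by (subst Gf.simps) auto

lemma fill:
  assumes m1: "1 \<le> m" and jle: "j \<le> e" and eK: "e < K" and ym: "b + m \<le> y" and em: "e \<le> m"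
  shows "NB m {b+2..b+K} ({b..b+K} - {b+e, y}) = NB m {b+j+2..b+K} ({b+j..b+K} - {b+e, y})"
  using jle
proof (induction j)
  case 0 then show ?case by simp
next
  case (Suc j)
  then have je: "j < e" by simp
  let ?A = "{b+j+2..b+K}" and ?B = "{b+j..b+K} - {b+e, y}"
  have a: "b+j+2 \<in> ?A" using je eK by simp
  have bj: "b+j \<in> ?B" using je ym em eK by auto
  have okbj: "okm m (b+j+2) (b+j)" by (simp add: okm_def)
  have "NB m ?A ?B = (\<Sum>z\<in>{z\<in>?B. okm m (b+j+2) z}. NB m (?A - {b+j+2}) (?B - {z}))"
    by (rule NB_split) (use a in auto)
  also have "\<dots> = NB m (?A - {b+j+2}) (?B - {b+j})"
  proof -
    let ?Z = "{z\<in>?B. okm m (b+j+2) z}"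
    have fz: "finite ?Z" by simp
    have "b+j \<in> ?Z" using bj okbj by simp
    then have "sum (\<lambda>z. NB m (?A - {b+j+2}) (?B - {z})) ?Z
        = NB m (?A - {b+j+2}) (?B - {b+j}) + sum (\<lambda>z. NB m (?A - {b+j+2}) (?B - {z})) (?Z - {b+j})"
      by (rule sum.remove[OF fz])
    also have "sum (\<lambda>z. NB m (?A - {b+j+2}) (?B - {z})) (?Z - {b+j}) = 0"
    proof (rule sum.neutral, rule ballI)
      fix z assume z: "z \<in> ?Z - {b+j}"
      show "NB m (?A - {b+j+2}) (?B - {z}) = 0"
      proof (rule NB_nopre[where b="b+j"])
        show "b+j \<in> ?B - {z}" using bj z by auto
        show "\<forall>x\<in>?A - {b+j+2}. \<not> okm m x (b+j)" using m1 by (auto simp: okm_def)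
      qed
    qed
    finally show ?thesis by simp
  qed
  also have "?A - {b+j+2} = {b + Suc j + 2..b+K}" by auto
  also have "?B - {b+j} = {b + Suc j..b+K} - {b+e, y}" by auto
  finally show ?case using Suc by simp
qed

lemma G_main:
  assumes m1: "1 \<le> m"
  shows "e \<le> m \<Longrightarrow> NB m {b+1..b+K} ({b..b+K} - {b+e}) = Gf m e K"
proof (induction K arbitrary: b e rule: less_induct)
  case (less K)
  show ?case
  proof (cases "K = 0")
    case True
    then show ?thesis
    proof (cases "e = 0")
      case True then show ?thesis using \<open>K = 0\<close> by (simp add: NB_empty Gf.simps[of m 0 0])
    next
      case False
      then have "NB m {b+1..b+K} ({b..b+K} - {b+e}) = 0" using \<open>K = 0\<close> by (intro NB_card_neq) auto
      then show ?thesis using False \<open>K = 0\<close> by (simp add: Gf.simps[of m e 0])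
    qed
  next
    case Kpos: False
    show ?thesis
    proof (cases "K \<le> e")
      case True
      have "NB m {b+1..b+K} ({b..b+K} - {b+e}) = 0"
      proof (cases "K < e")
        case True
        have "card ({b..b+K} - {b+e}) = K + 1" using True by simp
        then show ?thesis by (intro NB_card_neq) auto
      next
        case False
        then have Ke: "K = e" using True by simp
        have a: "b+1 \<in> {b+1..b+K}" using Kpos by simp
        have "NB m {b+1..b+K} ({b..b+K} - {b+e}) = (\<Sum>y\<in>{y\<in>{b..b+K} - {b+e}. okm m (b+1) y}. NB m ({b+1..b+K} - {b+1}) ({b..b+K} - {b+e} - {y}))"
          by (rule NB_split) (use a in auto)
        also have "{y\<in>{b..b+K} - {b+e}. okm m (b+1) y} = {}"
          using Ke less.prems by (auto simp: okm_def)
        finally show ?thesis by simp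
      qed
      then show ?thesis using True Kpos by (simp add: Gf.simps[of m e K])
    next
      case False
      let ?A = "{b+1..b+K}" and ?B = "{b..b+K} - {b+e}"
      have a: "b+1 \<in> ?A" using Kpos by simp
      have "NB m ?A ?B = (\<Sum>y\<in>{y\<in>?B. okm m (b+1) y}. NB m (?A - {b+1}) (?B - {y}))"
        by (rule NB_split) (use a in auto)
      also have "\<dots> = (\<Sum>y\<in>{b+m, b+m+1} - {b+e}. NB m (?A - {b+1}) (?B - {y}))"
      proof (rule sum.mono_neutral_left)
        show "finite ({b+m, b+m+1} - {b+e})" by simp
        show "{y\<in>?B. okm m (b+1) y} \<subseteq> {b+m, b+m+1} - {b+e}" by (auto simp: okm_def)
        show "\<forall>i\<in>{b+m, b+m+1} - {b+e} - {y\<in>?B. okm m (b+1) y}. NB m (?A - {b+1}) (?B - {i}) = 0"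
        proof
          fix i assume i: "i \<in> {b+m, b+m+1} - {b+e} - {y\<in>?B. okm m (b+1) y}"
          then have "i > b + K" by (auto simp: okm_def)
          then have "card (?B - {i}) = K" using False by simp
          moreover have "card (?A - {b+1}) = K - 1" using Kpos by simp
          ultimately show "NB m (?A - {b+1}) (?B - {i}) = 0" using Kpos by (intro NB_card_neq) auto
        qed
      qed
      also have "\<dots> = (\<Sum>y\<in>{b+m, b+m+1} - {b+e}. Gf m (y - b - e - 1) (K - e - 1))"
      proof (rule sum.cong[OF refl])
        fix y assume y: "y \<in> {b+m, b+m+1} - {b+e}"
        show "NB m (?A - {b+1}) (?B - {y}) = Gf m (y - b - e - 1) (K - e - 1)"
        proof -
          have eK: "e < K" using False by simp
          have e1: "?A - {b+1} = {b+2..b+K}" by auto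
          have e2: "?B - {y} = {b..b+K} - {b+e, y}" by auto
          have ym: "b + m \<le> y" using y by auto
          have "NB m (?A - {b+1}) (?B - {y}) = NB m {b+e+2..b+K} ({b+e..b+K} - {b+e, y})"
            unfolding e1 e2 by (rule fill[OF m1 order_refl eK ym less.prems])
          also have "{b+e+2..b+K} = {(b+e+1)+1..(b+e+1)+(K-e-1)}" using eK by auto
          also have "{b+e..b+K} - {b+e, y} = {(b+e+1)..(b+e+1)+(K-e-1)} - {(b+e+1) + (y - b - e - 1)}"
            using eK y less.prems by auto
          also have "NB m {(b+e+1)+1..(b+e+1)+(K-e-1)} ({(b+e+1)..(b+e+1)+(K-e-1)} - {(b+e+1) + (y - b - e - 1)})
               = Gf m (y - b - e - 1) (K - e - 1)"
            using y less.prems eK by (intro less.IH) auto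
          finally show ?thesis .
        qed
      qed
      also have "\<dots> = Gf m e K"
      proof (cases "e < m")
        case True
        then have "{b+m, b+m+1} - {b+e} = {b+m, b+m+1}" by auto
        then show ?thesis using True False Kpos by (simp add: Gf.simps[of m e K])
      next
        case em: False
        then have "{b+m, b+m+1} - {b+e} = {b+m+1}" using less.prems by auto
        then show ?thesis using em False Kpos by (simp add: Gf.simps[of m e K])
      qed
      finally show ?thesis .
    qed
  qed
qed

definition S :: "nat \<Rightarrow> int \<Rightarrow> nat" where
  "S m i = (if i < 0 then 0 else s_pq (m+1) (m+2) (nat i))"

lemma S_neg: "i < 0 \<Longrightarrow> S m i = 0" by (simp add: S_def)

lemma S_nat: "S m (int n) = s_pq (m+1) (m+2) n" by (simp add: S_def)

lemma S_rec:
  assumes "0 \<le> i"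
  shows "S m i = (if i = 0 then 1 else 0) + S m (i - int m - 1) + S m (i - int m - 2)"
proof -
  obtain n where n: "i = int n" using assms by (metis nonneg_eq_int)
  have "S m i = s_pq (m+1) (m+2) n" by (simp add: n S_def)
  also have "\<dots> = (if n = 0 then 1 else 0) + (if m+1 \<le> n then s_pq (m+1) (m+2) (n - (m+1)) else 0)
      + (if m+2 \<le> n then s_pq (m+1) (m+2) (n - (m+2)) else 0)"
    by (subst s_pq.simps) simp
  also have "(if m+1 \<le> n then s_pq (m+1) (m+2) (n - (m+1)) else 0) = S m (i - int m - 1)"
    by (auto simp: n S_def nat_diff_distrib)
  also have "(if m+2 \<le> n then s_pq (m+1) (m+2) (n - (m+2)) else 0) = S m (i - int m - 2)"
    by (auto simp: n S_def nat_diff_distrib)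
  finally show ?thesis using n by simp
qed

lemma sum_lessThan_split: "(\<Sum>K<(a::nat)+b. f K) = (\<Sum>K<a. f K) + (\<Sum>K<b. f (K + a))"
  by (induction b) (simp_all add: ac_simps)

lemma sum_atMost_split: "(\<Sum>K\<le>(b::nat)+a. f K) = (\<Sum>K<a. f K) + (\<Sum>K\<le>b. f (K + a))"
  by (induction b) (simp_all add: lessThan_Suc_atMost[symmetric] add.assoc)

lemma Gf_mid: "0 < K \<Longrightarrow> K \<le> e \<Longrightarrow> Gf m e K = 0"
  by (subst Gf.simps) simp

lemma Gf_step: "e < K \<Longrightarrow> Gf m e K = (if e < m then Gf m (m - e - 1) (K - e - 1) else 0) + Gf m (m - e) (K - e - 1)"
  by (subst Gf.simps) simp

lemma J:
  assumes m1: "1 \<le> m"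
  shows "e \<le> m \<Longrightarrow> int N \<ge> M + int e + 1 \<Longrightarrow>
    S m (M + int e + 1) * S m M = (if e = m then (S m M)^2 else 0)
       + (\<Sum>K<N. Gf m e K * (S m (M + int e - 1 - int K - int m))^2)"
proof (induction "nat (M + 1)" arbitrary: M e N rule: less_induct)
  case less
  show ?case
  proof (cases "M < 0")
    case True
    have "(\<Sum>K<N. Gf m e K * (S m (M + int e - 1 - int K - int m))^2) = 0"
      using True less.prems by (intro sum.neutral) (auto simp: S_neg)
    then show ?thesis using True by (simp add: S_neg)
  next
    case False
    let ?f = "\<lambda>K. Gf m e K * (S m (M + int e - 1 - int K - int m))^2"
    let ?N' = "N - e - 1"
    have NN: "N = (e + 1) + ?N'" using False less.prems by linarith
    have "(\<Sum>K<N. ?f K) = (\<Sum>K<e+1. ?f K) + (\<Sum>K<?N'. ?f (K + (e+1)))"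
      by (subst NN) (rule sum_lessThan_split)
    also have "(\<Sum>K<e+1. ?f K) = ?f 0"
    proof -
      have "(\<Sum>K<Suc e. ?f K) = ?f 0 + (\<Sum>K<e. ?f (Suc K))" by (rule sum.lessThan_Suc_shift)
      moreover have "(\<Sum>K<e. ?f (Suc K)) = 0" by (intro sum.neutral) (auto simp: Gf_mid)
      ultimately show ?thesis by simp
    qed
    also have "?f 0 = (if e = 0 then (S m (M - int m - 1))^2 else 0)"
      by (simp add: Gf.simps[of m e 0] algebra_simps)
    also have "(\<Sum>K<?N'. ?f (K + (e+1))) =
        (if e < m then (\<Sum>K<?N'. Gf m (m - e - 1) K * (S m (M - 2 - int K - int m))^2) else 0)
        + (\<Sum>K<?N'. Gf m (m - e) K * (S m (M - 2 - int K - int m))^2)"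
      by (simp add: Gf_step sum.distrib distrib_right algebra_simps)
    finally have R: "(\<Sum>K<N. ?f K) = (if e = 0 then (S m (M - int m - 1))^2 else 0) +
        ((if e < m then (\<Sum>K<?N'. Gf m (m - e - 1) K * (S m (M - 2 - int K - int m))^2) else 0)
        + (\<Sum>K<?N'. Gf m (m - e) K * (S m (M - 2 - int K - int m))^2))" .
    have Sn: "S m (M + int e + 1) = S m (M + int e - int m) + S m (M + int e - int m - 1)"
      using S_rec[of "M + int e + 1" m] False by (simp add: algebra_simps)
    have T2: "S m (M + int e - int m - 1) * S m M = (if e = 0 then (S m (M - int m - 1))^2 else 0)
        + (\<Sum>K<?N'. Gf m (m - e) K * (S m (M - 2 - int K - int m))^2)"
    proof -
      have h: "S m ((M + int e - int m - 1) + int (m - e) + 1) * S m (M + int e - int m - 1) =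
        (if m - e = m then (S m (M + int e - int m - 1))^2 else 0)
        + (\<Sum>K<?N'. Gf m (m - e) K * (S m ((M + int e - int m - 1) + int (m - e) - 1 - int K - int m))^2)"
        using less.prems False m1 by (intro less.hyps) auto
      have e1: "(M + int e - int m - 1) + int (m - e) + 1 = M" using less.prems by simp
      have e2: "\<And>K. (M + int e - int m - 1) + int (m - e) - 1 - int K - int m = M - 2 - int K - int m"
        using less.prems by simp
      have e3: "(m - e = m) = (e = 0)" using less.prems m1 by auto
      show ?thesis using h unfolding e1 e2 e3 by (auto simp: mult.commute)
    qed
    have T1: "S m (M + int e - int m) * S m M = (if e = m then (S m M)^2 else 0) +
        (if e < m then (\<Sum>K<?N'. Gf m (m - e - 1) K * (S m (M - 2 - int K - int m))^2) else 0)"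
    proof (cases "e < m")
      case True
      have h: "S m ((M + int e - int m) + int (m - e - 1) + 1) * S m (M + int e - int m) =
        (if m - e - 1 = m then (S m (M + int e - int m))^2 else 0)
        + (\<Sum>K<?N'. Gf m (m - e - 1) K * (S m ((M + int e - int m) + int (m - e - 1) - 1 - int K - int m))^2)"
        using less.prems False m1 True by (intro less.hyps) auto
      have e1: "(M + int e - int m) + int (m - e - 1) + 1 = M" using True by simp
      have e2: "\<And>K. (M + int e - int m) + int (m - e - 1) - 1 - int K - int m = M - 2 - int K - int m"
        using True by simp
      have e3: "(m - e - 1 = m) = False" using True by auto
      show ?thesis using h True unfolding e1 e2 e3 by (auto simp: mult.commute)
    next
      case False
      then have "e = m" using less.prems by simp
      then show ?thesis by (simp add: power2_eq_square)
    qed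
    show ?thesis using R Sn T1 T2 by (simp add: distrib_right algebra_simps)
  qed
qed


definition D :: "nat \<Rightarrow> int \<Rightarrow> nat" where
  "D m j = 2 * S m (j - int m - 1) * S m (j - int m - 2)"

definition X :: "nat \<Rightarrow> nat \<Rightarrow> nat" where
  "X m n = (\<Sum>k\<le>n. S m (int k) * D m (int n - int k))"

lemma Xshift:
  "(\<Sum>k\<le>n. S m (int k - int c) * D m (int n - int k)) = (if c \<le> n then X m (n - c) else 0)"
proof (cases "c \<le> n")
  case True
  have nn: "n = (n - c) + c" using True by simp
  have "(\<Sum>k\<le>n. S m (int k - int c) * D m (int n - int k))
      = (\<Sum>k<c. S m (int k - int c) * D m (int n - int k))
        + (\<Sum>k\<le>n-c. S m (int (k + c) - int c) * D m (int n - int (k + c)))"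
    by (subst nn) (rule sum_atMost_split)
  also have "(\<Sum>k<c. S m (int k - int c) * D m (int n - int k)) = 0"
    by (intro sum.neutral) (auto simp: S_neg)
  also have "(\<Sum>k\<le>n-c. S m (int (k + c) - int c) * D m (int n - int (k + c))) = X m (n - c)"
    unfolding X_def using True by (intro sum.cong) (auto simp: algebra_simps)
  finally show ?thesis using True by simp
next
  case False
  then show ?thesis by (auto intro!: sum.neutral simp: S_neg)
qed

lemma Ia: "(S m (int n))^2 = S m (int n) + X m n"
proof (induction n rule: less_induct)
  case (less n)
  let ?a = "S m (int n - int m - 1)" and ?b = "S m (int n - int m - 2)"
  have Xn: "X m n = D m (int n) + (if m+1 \<le> n then X m (n - (m+1)) else 0)
              + (if m+2 \<le> n then X m (n - (m+2)) else 0)"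
  proof -
    have "X m n = (\<Sum>k\<le>n. ((if k = 0 then 1 else 0) + S m (int k - int (m+1)) + S m (int k - int (m+2)))
                    * D m (int n - int k))"
      unfolding X_def
      by (intro sum.cong refl) (subst S_rec, auto simp: algebra_simps)
    also have "\<dots> = (\<Sum>k\<le>n. (if k = 0 then 1 else 0) * D m (int n - int k))
       + (\<Sum>k\<le>n. S m (int k - int (m+1)) * D m (int n - int k))
       + (\<Sum>k\<le>n. S m (int k - int (m+2)) * D m (int n - int k))"
      by (simp add: sum.distrib distrib_right)
    also have "(\<Sum>k\<le>n. (if k = 0 then 1 else 0) * D m (int n - int k)) = D m (int n)"
      by (subst sum.atMost_shift) simp
    finally show ?thesis by (simp only: Xshift)
  qed
  have A: "?a^2 = ?a + (if m+1 \<le> n then X m (n - (m+1)) else 0)"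
  proof (cases "m+1 \<le> n")
    case True
    have "int n - int m - 1 = int (n - (m+1))" using True by simp
    then show ?thesis using less.IH[of "n - (m+1)"] True by (simp add: algebra_simps)
  next
    case False then show ?thesis by (simp add: S_neg)
  qed
  have B: "?b^2 = ?b + (if m+2 \<le> n then X m (n - (m+2)) else 0)"
  proof (cases "m+2 \<le> n")
    case True
    have "int n - int m - 2 = int (n - (m+2))" using True by simp
    then show ?thesis using less.IH[of "n - (m+2)"] True by (simp add: algebra_simps)
  next
    case False then show ?thesis by (simp add: S_neg)
  qed
  show ?case
  proof (cases "n = 0")
    case True
    have S0: "S m 0 = 1" unfolding S_def by (subst s_pq.simps) simp
    then show ?thesis using True by (simp add: X_def D_def S_neg)
  next
    case False
    have Sn: "S m (int n) = ?a + ?b" using S_rec[of "int n" m] False by simp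
    have Dn: "D m (int n) = 2 * ?a * ?b" by (simp add: D_def)
    show ?thesis unfolding Sn Xn Dn using A B by (simp add: power2_eq_square algebra_simps)
  qed
qed


lemma Kl:
  assumes m1: "1 \<le> m"
  shows "S m (int j - int m - 1) * S m (int j - int m - 2) =
    (\<Sum>r=2*m+3..j. Gf m 0 (r - (2*m+3)) * (S m (int j - int r))^2)"
proof -
  let ?g = "\<lambda>K. Gf m 0 K * (S m (int j - 2 * int m - 3 - int K))^2"
  have h: "S m ((int j - int m - 2) + int 0 + 1) * S m (int j - int m - 2) = (if 0 = m then (S m (int j - int m - 2))^2 else 0)
       + (\<Sum>K<j+1. Gf m 0 K * (S m ((int j - int m - 2) + int 0 - 1 - int K - int m))^2)"
    by (rule J[OF m1]) auto
  have L: "S m (int j - int m - 1) * S m (int j - int m - 2) = (\<Sum>K<j+1. ?g K)"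
    using h m1 by (simp add: algebra_simps)
  show ?thesis
  proof (cases "2*m+3 \<le> j")
    case False
    have "(\<Sum>K<j+1. ?g K) = 0" using False by (intro sum.neutral) (auto simp: S_neg)
    then show ?thesis using L False by simp
  next
    case True
    let ?t = "j - (2*m+3)"
    have "(\<Sum>K<j+1. ?g K) = (\<Sum>K\<le>?t. ?g K)"
      by (rule sum.mono_neutral_right) (auto simp: S_neg)
    also have "\<dots> = (\<Sum>r=2*m+3..j. Gf m 0 (r - (2*m+3)) * (S m (int j - int r))^2)"
    proof -
      have jj: "{2*m+3..j} = {0 + (2*m+3)..?t + (2*m+3)}" using True by simp
      show ?thesis unfolding jj sum.shift_bounds_cl_nat_ivl atLeast0AtMost[symmetric]
        using True by (intro sum.cong) (auto simp: algebra_simps)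
    qed
    finally show ?thesis using L by simp
  qed
qed

theorem mainTheorem11':
  fixes m n :: nat
  assumes m1: "m \<ge> 1" and P: "\<And>N. P_perm {-2, int m - 1, int m} N = Gf m 0 N"
  shows "(s_pq (m+1) (m+2) n)^2 =
           s_pq (m+1) (m+2) n
           + 2 * (\<Sum>k\<in>{k. k + (2*m+3) \<le> n}. \<Sum>r=2*m+3..n-k.
                    P_perm {-2, int m - 1, int m} (r - (2*m+3))
                    * s_pq (m+1) (m+2) k * (s_pq (m+1) (m+2) (n - k - r))^2)"
proof -
  have A1: "X m n = (\<Sum>k\<le>n. S m (int k) * (2 * (\<Sum>r=2*m+3..n-k. Gf m 0 (r - (2*m+3)) * (S m (int (n-k) - int r))^2)))"
        unfolding X_def D_def
  proof (rule sum.cong[OF refl])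
    fix k assume k: "k \<in> {..n}"
    have kk: "int n - int k = int (n - k)" using k by simp
    have "S m (int n - int k - int m - 1) * S m (int n - int k - int m - 2) =
       (\<Sum>r=2*m+3..n-k. Gf m 0 (r - (2*m+3)) * (S m (int (n-k) - int r))^2)"
      unfolding kk by (rule Kl[OF m1, of "n - k"])
    then show "S m (int k) * (2 * S m (int n - int k - int m - 1) * S m (int n - int k - int m - 2)) =
         S m (int k) * (2 * (\<Sum>r=2*m+3..n-k. Gf m 0 (r - (2*m+3)) * (S m (int (n-k) - int r))^2))"
      by (simp only: mult.assoc)
  qed
  have A2: "(\<Sum>k\<le>n. S m (int k) * (2 * (\<Sum>r=2*m+3..n-k. Gf m 0 (r - (2*m+3)) * (S m (int (n-k) - int r))^2))) = (\<Sum>k\<in>{k. k + (2*m+3) \<le> n}. S m (int k) * (2 * (\<Sum>r=2*m+3..n-k. Gf m 0 (r - (2*m+3)) * (S m (int (n-k) - int r))^2)))"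
  proof (rule sum.mono_neutral_right)
    show "finite {..n}" by simp
    show "{k. k + (2*m+3) \<le> n} \<subseteq> {..n}" by auto
    show "\<forall>i\<in>{..n} - {k. k + (2*m+3) \<le> n}. S m (int i) * (2 * (\<Sum>r=2*m+3..n-i. Gf m 0 (r - (2*m+3)) * (S m (int (n-i) - int r))^2)) = 0"
    proof
      fix i assume "i \<in> {..n} - {k. k + (2*m+3) \<le> n}"
      then have "{2*m+3..n-i} = {}" by auto
      then show "S m (int i) * (2 * (\<Sum>r=2*m+3..n-i. Gf m 0 (r - (2*m+3)) * (S m (int (n-i) - int r))^2)) = 0"
        by simp
    qed
  qed
  have A3: "(\<Sum>k\<in>{k. k + (2*m+3) \<le> n}. S m (int k) * (2 * (\<Sum>r=2*m+3..n-k. Gf m 0 (r - (2*m+3)) * (S m (int (n-k) - int r))^2))) = 2 * (\<Sum>k\<in>{k. k + (2*m+3) \<le> n}. \<Sum>r=2*m+3..n-k.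
                    P_perm {-2, int m - 1, int m} (r - (2*m+3))
                    * s_pq (m+1) (m+2) k * (s_pq (m+1) (m+2) (n - k - r))^2)"
  proof -
  have "(\<Sum>k\<in>{k. k + (2*m+3) \<le> n}. S m (int k) * (2 * (\<Sum>r=2*m+3..n-k. Gf m 0 (r - (2*m+3)) * (S m (int (n-k) - int r))^2))) =
     (\<Sum>k\<in>{k. k + (2*m+3) \<le> n}. 2 * (\<Sum>r=2*m+3..n-k. P_perm {-2, int m - 1, int m} (r - (2*m+3))
                    * s_pq (m+1) (m+2) k * (s_pq (m+1) (m+2) (n - k - r))^2))"
  proof (rule sum.cong[OF refl])
    fix k assume k: "k \<in> {k. k + (2*m+3) \<le> n}"
    have "S m (int k) * (2 * (\<Sum>r=2*m+3..n-k. Gf m 0 (r - (2*m+3)) * (S m (int (n-k) - int r))^2))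
       = 2 * (\<Sum>r=2*m+3..n-k. S m (int k) * (Gf m 0 (r - (2*m+3)) * (S m (int (n-k) - int r))^2))"
      by (simp only: sum_distrib_left mult.left_commute)
    also have "\<dots> = 2 * (\<Sum>r=2*m+3..n-k. P_perm {-2, int m - 1, int m} (r - (2*m+3))
                    * s_pq (m+1) (m+2) k * (s_pq (m+1) (m+2) (n - k - r))^2)"
    proof (rule arg_cong[where f="\<lambda>x. 2 * x"], rule sum.cong[OF refl])
      fix r assume r: "r \<in> {2*m+3..n-k}"
      have rr: "int (n - k) - int r = int (n - k - r)" using r by auto
      show "S m (int k) * (Gf m 0 (r - (2*m+3)) * (S m (int (n-k) - int r))^2) =
         P_perm {-2, int m - 1, int m} (r - (2*m+3))
                    * s_pq (m+1) (m+2) k * (s_pq (m+1) (m+2) (n - k - r))^2"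
        unfolding rr S_nat P by (simp only: ac_simps)
    qed
    finally show "S m (int k) * (2 * (\<Sum>r=2*m+3..n-k. Gf m 0 (r - (2*m+3)) * (S m (int (n-k) - int r))^2))
       = 2 * (\<Sum>r=2*m+3..n-k. P_perm {-2, int m - 1, int m} (r - (2*m+3))
                    * s_pq (m+1) (m+2) k * (s_pq (m+1) (m+2) (n - k - r))^2)" .
  qed
  also have "\<dots> = 2 * (\<Sum>k\<in>{k. k + (2*m+3) \<le> n}. \<Sum>r=2*m+3..n-k. P_perm {-2, int m - 1, int m} (r - (2*m+3))
                    * s_pq (m+1) (m+2) k * (s_pq (m+1) (m+2) (n - k - r))^2)"
    by (rule sum_distrib_left[symmetric])
  finally show ?thesis .
  qed
  have XX: "X m n = 2 * (\<Sum>k\<in>{k. k + (2*m+3) \<le> n}. \<Sum>r=2*m+3..n-k.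
                    P_perm {-2, int m - 1, int m} (r - (2*m+3))
                    * s_pq (m+1) (m+2) k * (s_pq (m+1) (m+2) (n - k - r))^2)" 
    using A1 A2 A3 by simp
  show ?thesis using Ia[of m n] unfolding XX S_nat .
qed

lemma okm_iff:
  assumes "1 \<le> m"
  shows "(int y - int x \<in> {-2, int m - 1, int m}) = okm m x y"
  using assms unfolding okm_def by auto

lemma P_eq:
  assumes m1: "1 \<le> m"
  shows "P_perm {-2, int m - 1, int m} N = Gf m 0 N"
proof -
  have "{\<pi>. \<pi> permutes {1..N} \<and> (\<forall>i\<in>{1..N}. int (\<pi> i) - int i \<in> {-2, int m - 1, int m})}
      = FS m {1..N} {1..N}"
  proof (intro equalityI subsetI)
    fix p assume "p \<in> {\<pi>. \<pi> permutes {1..N} \<and> (\<forall>i\<in>{1..N}. int (\<pi> i) - int i \<in> {-2, int m - 1, int m})}"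
    then have p: "p permutes {1..N}" and w: "\<forall>i\<in>{1..N}. int (p i) - int i \<in> {-2, int m - 1, int m}" by auto
    have "bij_betw p {1..N} {1..N}" using p by (rule permutes_imp_bij)
    moreover have "\<forall>x. x \<notin> {1..N} \<longrightarrow> p x = x" using p by (simp add: permutes_not_in)
    moreover have "\<forall>x\<in>{1..N}. okm m x (p x)" using w okm_iff[OF m1] by blast
    ultimately show "p \<in> FS m {1..N} {1..N}" by (simp add: FS_def)
  next
    fix p assume "p \<in> FS m {1..N} {1..N}"
    then have b: "bij_betw p {1..N} {1..N}" and o: "\<forall>x. x \<notin> {1..N} \<longrightarrow> p x = x"
      and k: "\<forall>x\<in>{1..N}. okm m x (p x)" by (auto simp: FS_def)
    have "p permutes {1..N}" using b o by (intro bij_imp_permutes) auto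
    moreover have "\<forall>i\<in>{1..N}. int (p i) - int i \<in> {-2, int m - 1, int m}" using k okm_iff[OF m1] by blast
    ultimately show "p \<in> {\<pi>. \<pi> permutes {1..N} \<and> (\<forall>i\<in>{1..N}. int (\<pi> i) - int i \<in> {-2, int m - 1, int m})}"
      by blast
  qed
  then have "P_perm {-2, int m - 1, int m} N = NB m {1..N} {1..N}" by (simp add: P_perm_def NB_def)
  also have "{1..N} = {0..N} - {0::nat}" by auto
  also have "NB m ({0..N} - {0}) ({0..N} - {0}) = Gf m 0 N"
    using G_main[OF m1, of 0 0 N] by (simp add: \<open>{1..N} = {0..N} - {0::nat}\<close>[symmetric])
  finally show ?thesis .
qed

theorem mainTheorem11:
  fixes m n :: nat
  assumes "m \<ge> 1"
  shows "(s_pq (m+1) (m+2) n)^2 =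
           s_pq (m+1) (m+2) n
           + 2 * (\<Sum>k\<in>{k. k + (2*m+3) \<le> n}. \<Sum>r=2*m+3..n-k.
                    P_perm {-2, int m - 1, int m} (r - (2*m+3))
                    * s_pq (m+1) (m+2) k * (s_pq (m+1) (m+2) (n - k - r))^2)"
  by (rule mainTheorem11'[OF assms P_eq[OF assms]])

end
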